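(* Let $G\subset\mathbb{C}$ be a simply connected domain, let $\mathcal{S}\subset G$ be a smooth Jordan curve with bounded face $D$, let $\Gamma\subset\mathbb{C}$ be a smooth Jordan curve with bounded face $\Omega_-$ and unbounded face $\Omega_+$ (with $\infty\in\Omega_+$), and let $f:G\to\hat{\mathbb{C}}$ be meromorphic. Suppose $\mathcal{S}$ is a $\Gamma$-pseudo-lemniscate of $f$. Then for every connected component $E$ of $f^{-1}(\Omega_-)\cap D$ there is a positive integer $n_E$ such that every $w\in\Omega_-$ has exactly $n_E$ preimages under $f$ in $E$, counted with multiplicity. The analogous statement holds with $\Omega_-$ replaced by $\Omega_+$.
   Context: For a meromorphic $f:G\to\hat{\mathbb{C}}$ and a smooth Jordan curve $\Gamma\subset\mathbb{C}$, a connected component of $f^{-1}(\Gamma)$ (in $G$) is called a $\Gamma$-pseudo-lemniscate of $f$. *)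

theory Defs
  imports "HOL-Analysis.Analysis"
begin

primrec vderiv_iter :: "nat \<Rightarrow> (real \<Rightarrow> complex) \<Rightarrow> real \<Rightarrow> complex" where
  "vderiv_iter 0 g = g"
| "vderiv_iter (Suc n) g = (\<lambda>t. vector_derivative (vderiv_iter n g) (at t))"

definition smooth_jordan_curve :: "complex set \<Rightarrow> bool" where
  "smooth_jordan_curve C \<longleftrightarrow>
     (\<exists>\<gamma> :: real \<Rightarrow> complex.
        (\<forall>t. \<gamma> (t + 1) = \<gamma> t) \<and>
        inj_on \<gamma> {0..<1} \<and>
        (\<forall>n t. vderiv_iter n \<gamma> differentiable (at t)) \<and>
        (\<forall>t. vector_derivative \<gamma> (at t) \<noteq> 0) \<and>
        C = \<gamma> ` {0..1})"

text \<open>A meromorphic function f : G \<rightarrow> the Riemann sphere, represented by a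
  complex-valued function f together with its set P of poles (the points
  mapped to infinity): P is a discrete subset of G without accumulation
  points in G, f is holomorphic on G - P, and f tends to infinity at every
  point of P.  The values of f on P are irrelevant.\<close>
definition meromorphic_with_poles ::
    "(complex \<Rightarrow> complex) \<Rightarrow> complex set \<Rightarrow> complex set \<Rightarrow> bool" where
  "meromorphic_with_poles f G P \<longleftrightarrow>
     P \<subseteq> G \<and> (\<forall>z\<in>G. \<not> z islimpt P) \<and> f holomorphic_on (G - P) \<and>
     (\<forall>p\<in>P. filterlim f at_infinity (at p))"

definition zero_order :: "(complex \<Rightarrow> complex) \<Rightarrow> complex \<Rightarrow> nat" where
  "zero_order g z = (LEAST n. (deriv ^^ n) g z \<noteq> 0)"

definition mult_at :: "(complex \<Rightarrow> complex) \<Rightarrow> complex \<Rightarrow> complex \<Rightarrow> nat" where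
  "mult_at f w z = zero_order (\<lambda>x. f x - w) z"

text \<open>Multiplicity of a pole p as a preimage of infinity: order of the zero
  of 1/f (extended by 0 on the poles) at p.\<close>
definition pole_mult :: "(complex \<Rightarrow> complex) \<Rightarrow> complex set \<Rightarrow> complex \<Rightarrow> nat" where
  "pole_mult f P p = zero_order (\<lambda>x. if x \<in> P then 0 else inverse (f x)) p"

end

theory Submission
  imports Defs "HOL-Complex_Analysis.Complex_Analysis"
begin

lemma zero_order_zorder:
  assumes "g holomorphic_on S" "open S" "connected S" "z \<in> S" "\<exists>w\<in>S. g w \<noteq> 0"
  shows "int (zero_order g z) = zorder g z"
proof -
  have ex: "\<exists>n. (deriv ^^ n) g z \<noteq> 0"
  proof (rule ccontr)
    assume "\<not> ?thesis"
    then have "\<And>n. (deriv ^^ n) g z = 0" by auto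
    then have "\<forall>w\<in>S. g w = 0" using holomorphic_fun_eq_0_on_connected[OF assms(1-3)] assms(4) by blast
    then show False using assms(5) by auto
  qed
  define n where "n = zero_order g z"
  have n1: "(deriv ^^ n) g z \<noteq> 0" unfolding n_def zero_order_def by (rule LeastI_ex[OF ex])
  have n2: "\<And>i. i < n \<Longrightarrow> (deriv ^^ i) g z = 0" unfolding n_def zero_order_def
    using not_less_Least by blast
  have "zorder g z = int n"
    by (rule zorder_zero_eqI[OF assms(1,2,4)]) (use n1 n2 in auto)
  then show ?thesis by (simp add: n_def)
qed

lemma zero_order_pos:
  assumes "g holomorphic_on S" "open S" "connected S" "z \<in> S" "\<exists>w\<in>S. g w \<noteq> 0" "g z = 0"
  shows "zero_order g z > 0"
proof -
  have ex: "\<exists>n. (deriv ^^ n) g z \<noteq> 0"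
  proof (rule ccontr)
    assume "\<not> ?thesis"
    then have "\<And>n. (deriv ^^ n) g z = 0" by auto
    then have "\<forall>w\<in>S. g w = 0" using holomorphic_fun_eq_0_on_connected[OF assms(1-3)] assms(4) by blast
    then show False using assms(5) by auto
  qed
  have n1: "(deriv ^^ zero_order g z) g z \<noteq> 0" unfolding zero_order_def by (rule LeastI_ex[OF ex])
  then show ?thesis using assms(6) by (cases "zero_order g z") auto
qed

lemma pre_closed_eq:
  assumes "open E" "\<forall>z\<in>frontier E. f z \<notin> \<Omega>" "w \<in> \<Omega>"
  shows "{z\<in>E. f z = w} = {z\<in>closure E. f z = w}"
  using assms closure_Un_frontier[of E] by auto

lemma finite_pre:
  fixes f :: "complex \<Rightarrow> complex"
  assumes U: "open U" "f holomorphic_on U"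
    and E: "open E" "connected E" "bounded E" "closure E \<subseteq> U"
    and Om: "\<forall>z\<in>frontier E. f z \<notin> \<Omega>"
    and nc: "\<forall>w. \<exists>z\<in>E. f z \<noteq> w" and w: "w \<in> \<Omega>"
  shows "finite {z\<in>E. f z = w}"
proof -
  have cont: "continuous_on (closure E) f"
    using U E holomorphic_on_imp_continuous_on holomorphic_on_subset by blast
  have "closed {z\<in>closure E. f z = w}"
    by (rule continuous_closed_preimage_constant[OF cont]) simp
  moreover have "bounded {z\<in>closure E. f z = w}"
    using E(3) bounded_closure bounded_subset by (metis (no_types, lifting) mem_Collect_eq subsetI)
  ultimately have K: "compact {z\<in>E. f z = w}"
    using pre_closed_eq[OF E(1) Om w] by (simp add: compact_eq_bounded_closed)
  have hol: "(\<lambda>z. f z - w) holomorphic_on E"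
  proof -
    have "f holomorphic_on E" using holomorphic_on_subset[OF U(2)] closure_subset[of E] E(4) by blast
    then show ?thesis by (intro holomorphic_intros)
  qed
  have ncs: "\<not> (\<lambda>z. f z - w) constant_on E"
  proof
    assume "(\<lambda>z. f z - w) constant_on E"
    then obtain c where c: "\<And>z. z \<in> E \<Longrightarrow> f z - w = c" unfolding constant_on_def by blast
    obtain z where "z \<in> E" "f z \<noteq> c + w" using nc by blast
    then show False using c by force
  qed
  have "finite {z\<in>{z\<in>E. f z = w}. f z - w = 0}"
    by (rule holomorphic_compact_finite_zeros[OF hol E(1,2) K _ ncs]) auto
  then show ?thesis by simp
qed

lemma mult_zorder:
  fixes f :: "complex \<Rightarrow> complex"
  assumes fE: "f holomorphic_on E" and E: "open E" "connected E"
    and nc: "\<forall>w. \<exists>z\<in>E. f z \<noteq> w" and z: "z \<in> E"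
  shows "int (mult_at f w z) = zorder (\<lambda>x. f x - w) z"
  unfolding mult_at_def
proof (rule zero_order_zorder[OF _ E z])
  show "(\<lambda>x. f x - w) holomorphic_on E" using fE by (intro holomorphic_intros)
  show "\<exists>x\<in>E. f x - w \<noteq> 0" using nc by force
qed

lemma mult_pos:
  fixes f :: "complex \<Rightarrow> complex"
  assumes fE: "f holomorphic_on E" and E: "open E" "connected E"
    and nc: "\<forall>w. \<exists>z\<in>E. f z \<noteq> w" and z: "z \<in> E" and fz: "f z = w"
  shows "mult_at f w z > 0"
  unfolding mult_at_def
proof (rule zero_order_pos[OF _ E z])
  show "(\<lambda>x. f x - w) holomorphic_on E" using fE by (intro holomorphic_intros)
  show "\<exists>x\<in>E. f x - w \<noteq> 0" using nc by force
qed (use fz in auto)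

lemma finite_radius:
  fixes Z E :: "complex set"
  assumes "finite Z" "Z \<subseteq> E" "open E"
  obtains R where "R > 0" "\<And>z. z \<in> Z \<Longrightarrow> cball z R \<subseteq> E"
    "\<And>z z'. z \<in> Z \<Longrightarrow> z' \<in> Z \<Longrightarrow> z \<noteq> z' \<Longrightarrow> 4 * R < dist z z'"
proof -
  have "\<forall>z\<in>E. \<exists>r>0. cball z r \<subseteq> E" using assms(3) open_contains_cball by blast
  then obtain \<rho> where \<rho>: "\<And>z. z \<in> E \<Longrightarrow> \<rho> z > 0 \<and> cball z (\<rho> z) \<subseteq> E" by metis
  define D where "D = (\<lambda>p. dist (fst p) (snd p) / 5) ` ((Z \<times> Z) - {p. fst p = snd p})"
  define M where "M = insert 1 (\<rho> ` Z \<union> D)"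
  have finD: "finite D" unfolding D_def using assms(1) by simp
  have finM: "finite M" unfolding M_def using finD assms(1) by simp
  define R where "R = Min M"
  have pos: "x > 0" if xM: "x \<in> M" for x
  proof -
    consider "x = 1" | "x \<in> \<rho> ` Z" | "x \<in> D" using xM unfolding M_def by blast
    then show ?thesis
    proof cases
      case 2 then show ?thesis using \<rho> assms(2) by blast
    next
      case 3 then obtain p where "p \<in> Z \<times> Z" "fst p \<noteq> snd p" "x = dist (fst p) (snd p) / 5"
        unfolding D_def by blast
      moreover have "dist (fst p) (snd p) > 0" using \<open>fst p \<noteq> snd p\<close> by simp
      ultimately show ?thesis by linarith
    qed simp
  qed
  have "R > 0" unfolding R_def using finM pos by (simp add: Min_gr_iff M_def)
  moreover have "cball z R \<subseteq> E" if "z \<in> Z" for z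
  proof -
    have "\<rho> z \<in> M" unfolding M_def using that by blast
    then have "R \<le> \<rho> z" unfolding R_def using finM by (intro Min_le)
    moreover have "cball z (\<rho> z) \<subseteq> E" using \<rho>[of z] that assms(2) by blast
    ultimately show ?thesis using subset_cball[of R "\<rho> z" z] by blast
  qed
  moreover have "4 * R < dist z z'" if "z \<in> Z" "z' \<in> Z" "z \<noteq> z'" for z z'
  proof -
    have "(z, z') \<in> (Z \<times> Z) - {p. fst p = snd p}" using that by simp
    then have "dist z z' / 5 \<in> D" unfolding D_def by (metis (no_types, lifting) fst_conv image_eqI snd_conv)
    then have "dist z z' / 5 \<in> M" unfolding M_def by blast
    then have "R \<le> dist z z' / 5" unfolding R_def using finM by (intro Min_le)
    moreover have "dist z z' > 0" using that by simp
    ultimately show ?thesis by linarith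
  qed
  ultimately show ?thesis using that by blast
qed

lemma local_const:
  fixes f :: "complex \<Rightarrow> complex"
  assumes U: "open U" "f holomorphic_on U"
    and E: "open E" "connected E" "bounded E" "closure E \<subseteq> U"
    and Om: "open \<Omega>" "\<forall>z\<in>frontier E. f z \<notin> \<Omega>"
    and nc: "\<forall>w. \<exists>z\<in>E. f z \<noteq> w" and w1: "w1 \<in> \<Omega>"
  shows "\<exists>e>0. \<forall>w\<in>ball w1 e. w \<in> \<Omega> \<and>
     (\<Sum>z\<in>{z\<in>E. f z = w}. mult_at f w z) = (\<Sum>z\<in>{z\<in>E. f z = w1}. mult_at f w1 z)"
proof -
  define Z where "Z = {z\<in>E. f z = w1}"
  have finZ: "finite Z" unfolding Z_def by (rule finite_pre[OF U E Om(2) nc w1])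
  have ZE: "Z \<subseteq> E" unfolding Z_def by blast
  have fE: "f holomorphic_on E" using holomorphic_on_subset[OF U(2)] closure_subset[of E] E(4) by blast
  have contc: "continuous_on (closure E) f"
    using U E holomorphic_on_imp_continuous_on holomorphic_on_subset by blast
  obtain R where R: "R > 0" "\<And>z. z \<in> Z \<Longrightarrow> cball z R \<subseteq> E"
    "\<And>z z'. z \<in> Z \<Longrightarrow> z' \<in> Z \<Longrightarrow> z \<noteq> z' \<Longrightarrow> 4 * R < dist z z'"
    using finite_radius[OF finZ ZE E(1)] by blast
  define r where "r = R / 2"
  have r: "r > 0" "r < R" using R(1) by (auto simp: r_def)
  define K where "K = closure E - (\<Union>z\<in>Z. ball z r)"
  have Kc: "compact K"
  proof -
    have "closed K" unfolding K_def by (intro closed_Diff open_UN) auto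
    moreover have "bounded K" unfolding K_def using E(3) bounded_closure bounded_subset by blast
    ultimately show ?thesis by (simp add: compact_eq_bounded_closed)
  qed
  have fK: "f x \<noteq> w1" if "x \<in> K" for x
  proof
    assume fx: "f x = w1"
    have "x \<in> closure E" using that K_def by blast
    then consider "x \<in> E" | "x \<in> frontier E" using closure_Un_frontier[of E] by blast
    then show False
    proof cases
      case 1
      then have "x \<in> Z" using fx Z_def by blast
      then have "x \<in> (\<Union>z\<in>Z. ball z r)" using r(1) by force
      then show False using that K_def by blast
    next
      case 2 then show False using Om(2) fx w1 by blast
    qed
  qed
  obtain \<delta> where \<delta>: "\<delta> > 0" "\<And>x. x \<in> K \<Longrightarrow> \<delta> \<le> cmod (f x - w1)"
  proof (cases "K = {}")
    case True then show ?thesis using that[of 1] by auto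
  next
    case False
    have "continuous_on K (\<lambda>x. cmod (f x - w1))"
      using contc K_def by (intro continuous_intros) (auto intro: continuous_on_subset)
    then obtain x0 where x0: "x0 \<in> K" "\<And>y. y \<in> K \<Longrightarrow> cmod (f x0 - w1) \<le> cmod (f y - w1)"
      using continuous_attains_inf[OF Kc False] by blast
    show ?thesis
      by (rule that[of "cmod (f x0 - w1)"]) (use x0 fK in auto)
  qed
  obtain eO where eO: "eO > 0" "ball w1 eO \<subseteq> \<Omega>" using Om(1) w1 openE by blast
  define e where "e = min \<delta> eO"
  have "e > 0" using \<delta> eO by (simp add: e_def)
  moreover have "w \<in> \<Omega> \<and> (\<Sum>z\<in>{z\<in>E. f z = w}. mult_at f w z) = (\<Sum>z\<in>Z. mult_at f w1 z)"
    if w: "w \<in> ball w1 e" for w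
  proof -
    have wO: "w \<in> \<Omega>" using w eO unfolding e_def by auto
    have wd: "cmod (w1 - w) < \<delta>" using w unfolding e_def by (simp add: dist_norm)
    define Zw where "Zw = {z\<in>E. f z = w}"
    have finZw: "finite Zw" unfolding Zw_def by (rule finite_pre[OF U E Om(2) nc wO])
    have notK: "x \<notin> K" if "x \<in> Zw" for x
    proof
      assume "x \<in> K"
      then have "\<delta> \<le> cmod (f x - w1)" using \<delta> by blast
      also have "f x - w1 = -(w1 - w)" using that Zw_def by auto
      finally show False using wd by (simp add: norm_minus_commute)
    qed
    have sub: "Zw = (\<Union>z\<in>Z. Zw \<inter> ball z r)"
    proof -
      have "x \<in> (\<Union>z\<in>Z. ball z r)" if "x \<in> Zw" for x
        using notK[OF that] that closure_subset unfolding K_def Zw_def by blast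
      then show ?thesis by blast
    qed
    have balls_disj: "ball z r \<inter> ball z' r = {}" if "z \<in> Z" "z' \<in> Z" "z \<noteq> z'" for z z'
    proof -
      have "4 * R < dist z z'" using R(3) that by blast
      then show ?thesis using r_def R(1) by (intro disjoint_ballI) auto
    qed
    have loc: "(\<Sum>x\<in>Zw \<inter> ball z r. mult_at f w x) = mult_at f w1 z" if z: "z \<in> Z" for z
    proof -
      define s where "s = ball z R"
      have sE: "s \<subseteq> E" using R(2)[OF z] s_def by auto
      have other: "x \<notin> ball z' r" if "x \<in> cball z R" "z' \<in> Z" "z' \<noteq> z" for x z'
      proof
        assume "x \<in> ball z' r"
        then have "dist z' x < r" by simp
        moreover have "dist z x \<le> R" using that(1) by simp
        moreover have "4 * R < dist z z'" using R(3) z that(2,3) by metis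
        moreover have "dist z z' \<le> dist z x + dist z' x" by (metis dist_commute dist_triangle)
        ultimately show False using r_def R(1) by linarith
      qed
      have inK: "x \<in> K" if "x \<in> cball z R" "x \<notin> ball z r" for x
      proof -
        have "x \<in> closure E" using that(1) R(2)[OF z] closure_subset by blast
        moreover have "x \<notin> (\<Union>z'\<in>Z. ball z' r)" using other that by blast
        ultimately show ?thesis unfolding K_def by blast
      qed
      have zeros_fg: "{p\<in>s. f p - w1 + (w1 - w) = 0} = Zw \<inter> ball z r"
      proof
        show "Zw \<inter> ball z r \<subseteq> {p\<in>s. f p - w1 + (w1 - w) = 0}"
          using r(2) unfolding s_def Zw_def by auto
        show "{p\<in>s. f p - w1 + (w1 - w) = 0} \<subseteq> Zw \<inter> ball z r"
        proof
          fix p assume p: "p \<in> {p\<in>s. f p - w1 + (w1 - w) = 0}"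
          then have pZw: "p \<in> Zw" using sE unfolding Zw_def by auto
          show "p \<in> Zw \<inter> ball z r"
          proof (rule ccontr)
            assume "p \<notin> Zw \<inter> ball z r"
            then have "p \<notin> ball z r" using pZw by blast
            moreover have "p \<in> cball z R" using p s_def by auto
            ultimately have "p \<in> K" using inK by blast
            then show False using notK pZw by blast
          qed
        qed
      qed
      have zeros_f: "{p\<in>s. f p - w1 = 0} = {z}"
      proof
        show "{z} \<subseteq> {p\<in>s. f p - w1 = 0}" using z R(1) unfolding s_def Z_def by auto
        show "{p\<in>s. f p - w1 = 0} \<subseteq> {z}"
        proof
          fix p assume p: "p \<in> {p\<in>s. f p - w1 = 0}"
          then have "p \<in> Z" using sE Z_def by auto
          moreover have "dist z p < R" using p s_def by auto
          ultimately show "p \<in> {z}" using R(3)[OF z] R(1) by force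
        qed
      qed
      have path_less: "\<forall>x\<in>path_image (circlepath z r). cmod (f x - w1) > cmod (w1 - w)"
      proof
        fix x assume "x \<in> path_image (circlepath z r)"
        then have x: "dist z x = r" using r(1) by simp
        then have "x \<in> K" using r by (intro inK) auto
        then show "cmod (f x - w1) > cmod (w1 - w)" using \<delta>(2) wd by fastforce
      qed
      have homo: "\<forall>x. x \<notin> s \<longrightarrow> winding_number (circlepath z r) x = 0"
      proof (intro allI impI)
        fix x assume "x \<notin> s"
        then have "x \<notin> cball z r" using r s_def by auto
        then show "winding_number (circlepath z r) x = 0"
          by (intro winding_number_zero_outside[of _ "cball z r"]) (use r(1) in auto)
      qed
      have fs: "(\<lambda>x. f x - w1) holomorphic_on s" using fE sE by (intro holomorphic_intros) (auto intro: holomorphic_on_subset)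
      have Rou: "(\<Sum>p\<in>{p\<in>s. f p - w1 + (w1 - w) = 0}. winding_number (circlepath z r) p * zorder (\<lambda>p. f p - w1 + (w1 - w)) p)
          = (\<Sum>p\<in>{p\<in>s. f p - w1 = 0}. winding_number (circlepath z r) p * zorder (\<lambda>p. f p - w1) p)"
        apply (rule Rouche_theorem[of s "\<lambda>x. f x - w1" "\<lambda>x. w1 - w" "circlepath z r"])
        using zeros_fg zeros_f finZw fs path_less homo r unfolding s_def by auto
      have fun_eq: "(\<lambda>p. f p - w1 + (w1 - w)) = (\<lambda>p. f p - w)" by auto
      have lhs: "(\<Sum>p\<in>Zw \<inter> ball z r. winding_number (circlepath z r) p * zorder (\<lambda>p. f p - w) p)
           = of_int (\<Sum>p\<in>Zw \<inter> ball z r. int (mult_at f w p))"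
      proof -
        have "(\<Sum>p\<in>Zw \<inter> ball z r. winding_number (circlepath z r) p * zorder (\<lambda>p. f p - w) p)
            = (\<Sum>p\<in>Zw \<inter> ball z r. of_int (int (mult_at f w p)))"
        proof (rule sum.cong[OF refl])
          fix p assume p: "p \<in> Zw \<inter> ball z r"
          then have "winding_number (circlepath z r) p = 1"
            by (intro winding_number_circlepath) (simp add: dist_norm norm_minus_commute)
          moreover have "int (mult_at f w p) = zorder (\<lambda>x. f x - w) p"
            using mult_zorder[OF fE E(1,2) nc] p Zw_def by blast
          ultimately show "winding_number (circlepath z r) p * of_int (zorder (\<lambda>p. f p - w) p) = of_int (int (mult_at f w p))"
            by simp
        qed
        then show ?thesis by simp
      qed
      have rhs: "(\<Sum>p\<in>{z}. winding_number (circlepath z r) p * zorder (\<lambda>p. f p - w1) p) = of_int (int (mult_at f w1 z))"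
      proof -
        have "zorder (\<lambda>x. f x - w1) z = int (mult_at f w1 z)"
          using mult_zorder[OF fE E(1,2) nc, of z w1] z ZE by auto
        then show ?thesis using winding_number_circlepath_centre[OF r(1)] by simp
      qed
      have "(of_int (\<Sum>p\<in>Zw \<inter> ball z r. int (mult_at f w p)) :: complex) = of_int (int (mult_at f w1 z))"
        using Rou unfolding zeros_fg zeros_f fun_eq lhs rhs .
      then have "(\<Sum>p\<in>Zw \<inter> ball z r. int (mult_at f w p)) = int (mult_at f w1 z)"
        using of_int_eq_iff by blast
      then show ?thesis by (metis of_nat_eq_iff of_nat_sum)
    qed
    have "(\<Sum>x\<in>Zw. mult_at f w x) = (\<Sum>x\<in>(\<Union>z\<in>Z. Zw \<inter> ball z r). mult_at f w x)"
      using sub by simp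
    also have "\<dots> = (\<Sum>z\<in>Z. \<Sum>x\<in>Zw \<inter> ball z r. mult_at f w x)"
      by (rule sum.UNION_disjoint) (use finZ finZw balls_disj in auto)
    also have "\<dots> = (\<Sum>z\<in>Z. mult_at f w1 z)"
      by (rule sum.cong[OF refl]) (rule loc)
    finally show ?thesis using wO Zw_def by blast
  qed
  ultimately show ?thesis unfolding Z_def by blast
qed

lemma degree:
  fixes f :: "complex \<Rightarrow> complex"
  assumes U: "open U" "f holomorphic_on U"
    and E: "open E" "connected E" "bounded E" "closure E \<subseteq> U" "E \<noteq> {}"
    and Om: "open \<Omega>" "connected \<Omega>" "f ` E \<subseteq> \<Omega>" "\<forall>z\<in>frontier E. f z \<notin> \<Omega>"
  shows "\<exists>n>0. \<forall>w\<in>\<Omega>. finite {z\<in>E. f z = w} \<and> (\<Sum>z\<in>{z\<in>E. f z = w}. mult_at f w z) = n"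
proof -
  have fE: "f holomorphic_on E" using holomorphic_on_subset[OF U(2)] closure_subset[of E] E(4) by blast
  have contc: "continuous_on (closure E) f"
    using U E holomorphic_on_imp_continuous_on holomorphic_on_subset by blast
  have nc: "\<forall>w. \<exists>z\<in>E. f z \<noteq> w"
  proof (rule ccontr)
    assume "\<not> ?thesis"
    then obtain w where w: "\<And>z. z \<in> E \<Longrightarrow> f z = w" by blast
    have "frontier E \<noteq> {}" using E(3,5) frontier_eq_empty not_bounded_UNIV by blast
    then obtain y where y: "y \<in> frontier E" by blast
    then have "y \<in> closure E" by (simp add: frontier_def)
    moreover have "f ` closure E \<subseteq> {w}"
      by (rule image_closure_subset[OF contc]) (use w in auto)
    ultimately have "f y = w" by blast
    obtain z0 where "z0 \<in> E" using E(5) by blast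
    then have "w \<in> \<Omega>" using w Om(3) by force
    then show False using Om(4) y \<open>f y = w\<close> by blast
  qed
  define N where "N w = (\<Sum>z\<in>{z\<in>E. f z = w}. mult_at f w z)" for w
  obtain z0 where z0: "z0 \<in> E" using E(5) by blast
  define w0 where "w0 = f z0"
  have w0: "w0 \<in> \<Omega>" using z0 Om(3) w0_def by blast
  define A where "A = {w\<in>\<Omega>. N w = N w0}"
  define B where "B = {w\<in>\<Omega>. N w \<noteq> N w0}"
  have lc: "\<exists>e>0. \<forall>w\<in>ball w1 e. w \<in> \<Omega> \<and> N w = N w1" if "w1 \<in> \<Omega>" for w1
    using local_const[OF U E(1-4) Om(1) Om(4) nc that] unfolding N_def by blast
  have oA: "open A" unfolding open_contains_ball
  proof
    fix w assume wA: "w \<in> A"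
    then have "w \<in> \<Omega>" unfolding A_def by simp
    then obtain e where e: "e > 0" "\<forall>v\<in>ball w e. v \<in> \<Omega> \<and> N v = N w" using lc[OF \<open>w \<in> \<Omega>\<close>] by blast
    have "ball w e \<subseteq> A"
    proof
      fix v assume "v \<in> ball w e"
      then have "v \<in> \<Omega>" "N v = N w" using e(2) by simp_all
      then show "v \<in> A" using wA unfolding A_def by simp
    qed
    then show "\<exists>e>0. ball w e \<subseteq> A" using e(1) by blast
  qed
  have oB: "open B" unfolding open_contains_ball
  proof
    fix w assume wA: "w \<in> B"
    then have "w \<in> \<Omega>" unfolding B_def by simp
    then obtain e where e: "e > 0" "\<forall>v\<in>ball w e. v \<in> \<Omega> \<and> N v = N w" using lc[OF \<open>w \<in> \<Omega>\<close>] by blast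
    have "ball w e \<subseteq> B"
    proof
      fix v assume "v \<in> ball w e"
      then have "v \<in> \<Omega>" "N v = N w" using e(2) by simp_all
      then show "v \<in> B" using wA unfolding B_def by simp
    qed
    then show "\<exists>e>0. ball w e \<subseteq> B" using e(1) by blast
  qed
  have "A \<inter> \<Omega> = {} \<or> B \<inter> \<Omega> = {}"
    by (rule connectedD[OF Om(2) oA oB]) (auto simp: A_def B_def)
  moreover have "w0 \<in> A \<inter> \<Omega>" using w0 A_def by blast
  ultimately have const: "\<And>w. w \<in> \<Omega> \<Longrightarrow> N w = N w0" unfolding B_def by blast
  have fin: "\<And>w. w \<in> \<Omega> \<Longrightarrow> finite {z\<in>E. f z = w}"
    using finite_pre[OF U E(1-4) Om(4) nc] by blast
  have "mult_at f w0 z0 \<le> N w0" unfolding N_def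
    by (rule member_le_sum) (use z0 w0_def fin[OF w0] in auto)
  moreover have "mult_at f w0 z0 > 0" using mult_pos[OF fE E(1,2) nc z0] w0_def by blast
  ultimately have "N w0 > 0" by linarith
  then show ?thesis using const fin unfolding N_def by blast
qed

lemma smooth_jordan_simple:
  assumes "smooth_jordan_curve C"
  obtains c where "simple_path c" "pathfinish c = pathstart c" "path_image c = C"
proof -
  obtain \<gamma> :: "real \<Rightarrow> complex" where per: "\<And>t. \<gamma> (t + 1) = \<gamma> t" and inj: "inj_on \<gamma> {0..<1}"
    and dif: "\<And>n t. vderiv_iter n \<gamma> differentiable (at t)" and C: "C = \<gamma> ` {0..1}"
    using assms unfolding smooth_jordan_curve_def by blast
  have "\<And>t. \<gamma> differentiable (at t)" using dif[of 0] by simp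
  then have "continuous_on {0..1} \<gamma>"
    by (meson continuous_at_imp_continuous_on differentiable_imp_continuous_within)
  then have p: "path \<gamma>" by (simp add: path_def)
  have g10: "\<gamma> 1 = \<gamma> 0" using per[of 0] by simp
  have lf: "loop_free \<gamma>" unfolding loop_free_def
  proof (intro ballI impI)
    fix x y :: real assume x: "x \<in> {0..1}" and y: "y \<in> {0..1}" and e: "\<gamma> x = \<gamma> y"
    define x' where "x' = (if x = 1 then 0 else x)"
    define y' where "y' = (if y = 1 then 0 else y)"
    have "x' \<in> {0..<1}" "y' \<in> {0..<1}" using x y by (auto simp: x'_def y'_def)
    moreover have "\<gamma> x' = \<gamma> y'" using e g10 by (auto simp: x'_def y'_def)
    ultimately have "x' = y'" using inj by (meson inj_onD)
    then show "x = y \<or> x = 0 \<and> y = 1 \<or> x = 1 \<and> y = 0"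
      using x y by (auto simp: x'_def y'_def split: if_splits)
  qed
  show ?thesis
  proof
    show "simple_path \<gamma>" using p lf by (simp add: simple_path_def)
    show "pathfinish \<gamma> = pathstart \<gamma>" using g10 by (simp add: pathfinish_def pathstart_def)
    show "path_image \<gamma> = C" using C by (simp add: path_image_def)
  qed
qed

lemma jordan_facts:
  assumes "smooth_jordan_curve C"
  shows "compact C" "open (inside C)" "connected (inside C)" "inside C \<noteq> {}" "bounded (inside C)"
    "open (outside C)" "connected (outside C)" "inside C \<union> outside C = - C"
    "inside C \<inter> outside C = {}"
proof -
  obtain c where c: "simple_path c" "pathfinish c = pathstart c" "path_image c = C"
    using smooth_jordan_simple[OF assms] by blast
  show "compact C" using c compact_simple_path_image by blast
  show "open (inside C)" "connected (inside C)" "inside C \<noteq> {}" "bounded (inside C)"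
    "open (outside C)" "connected (outside C)"
    using Jordan_inside_outside[OF c(1,2)] c(3) by auto
qed auto

lemma closure_component_open:
  fixes X :: "complex set"
  assumes "open X" "E \<in> components X" "z \<in> closure E" "z \<in> X"
  shows "z \<in> E"
proof -
  obtain C where C: "C \<in> components X" "z \<in> C" using assms(4) Union_components[of X] by blast
  have "open C" using open_components[OF assms(1) C(1)] .
  then have "C \<inter> E \<noteq> {}" using C(2) assms(3) open_Int_closure_eq_empty by blast
  then have "C = E" using components_nonoverlap[OF C(1) assms(2)] by blast
  then show ?thesis using C(2) by blast
qed

lemma closure_open_meet:
  fixes V :: "complex set"
  assumes "z \<in> closure E" "open V" "z \<in> V"
  obtains x where "x \<in> E" "x \<in> V"
  using assms open_Int_closure_eq_empty by blast

lemma pole_nbhd: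
  fixes f :: "complex \<Rightarrow> complex"
  assumes mero: "meromorphic_with_poles f G P" and G: "open G" and p: "p \<in> P"
  obtains \<rho> where "\<rho> > 0" "ball p \<rho> \<subseteq> G" "\<And>x. x \<in> ball p \<rho> \<Longrightarrow> x \<noteq> p \<Longrightarrow> x \<notin> P \<and> B < norm (f x)"
proof -
  have PG: "P \<subseteq> G" and nl: "\<And>z. z \<in> G \<Longrightarrow> \<not> z islimpt P" and lim: "filterlim f at_infinity (at p)"
    using mero p unfolding meromorphic_with_poles_def by auto
  have pG: "p \<in> G" using PG p by blast
  obtain r1 where r1: "r1 > 0" "ball p r1 \<subseteq> G" using G pG openE by blast
  obtain r2 where r2: "r2 > 0" "\<And>x. x \<in> P \<Longrightarrow> x \<noteq> p \<Longrightarrow> dist x p \<ge> r2"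
    using nl[OF pG] unfolding islimpt_approachable by (metis not_le)
  have "eventually (\<lambda>x. max B 0 + 1 \<le> norm (f x)) (at p)"
    using lim unfolding filterlim_at_infinity[OF order_refl] by simp
  then obtain r3 where r3: "r3 > 0" "\<And>x. x \<noteq> p \<Longrightarrow> dist x p < r3 \<Longrightarrow> max B 0 + 1 \<le> norm (f x)"
    unfolding eventually_at by blast
  show ?thesis
  proof (rule that[of "min r1 (min r2 r3)"])
    show "0 < min r1 (min r2 r3)" using r1 r2 r3 by simp
    show "ball p (min r1 (min r2 r3)) \<subseteq> G" using r1(2) by auto
    fix x assume x: "x \<in> ball p (min r1 (min r2 r3))" "x \<noteq> p"
    then have d: "dist x p < r2" "dist x p < r3" by (auto simp: dist_commute)
    show "x \<notin> P \<and> B < norm (f x)"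
    proof
      show "x \<notin> P" using r2(2) d x(2) by fastforce
      show "B < norm (f x)" using r3(2)[OF x(2) d(2)] by linarith
    qed
  qed
qed

lemma open_GP:
  fixes f :: "complex \<Rightarrow> complex"
  assumes mero: "meromorphic_with_poles f G P" and G: "open G"
  shows "open (G - P)"
  unfolding open_contains_ball
proof
  fix z assume z: "z \<in> G - P"
  have nl: "\<not> z islimpt P" using mero z unfolding meromorphic_with_poles_def by auto
  obtain r1 where r1: "r1 > 0" "ball z r1 \<subseteq> G" using G z openE by blast
  obtain r2 where r2: "r2 > 0" "\<And>x. x \<in> P \<Longrightarrow> x \<noteq> z \<Longrightarrow> dist x z \<ge> r2"
    using nl unfolding islimpt_approachable by (metis not_le)
  have "ball z (min r1 r2) \<subseteq> G - P"
  proof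
    fix x assume x: "x \<in> ball z (min r1 r2)"
    then have "x \<in> G" using r1 by auto
    moreover have "x \<notin> P" using r2(2)[of x] x z by (auto simp: dist_commute)
    ultimately show "x \<in> G - P" by blast
  qed
  then show "\<exists>e>0. ball z e \<subseteq> G - P" using r1 r2 by (metis min_less_iff_conj)
qed

lemma zero_order_unit:
  fixes g1 g2 u :: "complex \<Rightarrow> complex"
  assumes B: "open B" "connected B" "z \<in> B" and h2: "g2 holomorphic_on B" and hu: "u holomorphic_on B"
    and un: "\<forall>x\<in>B. u x \<noteq> 0" and eq: "\<forall>x\<in>B. g1 x = g2 x * u x"
  shows "zero_order g1 z = zero_order g2 z"
proof (cases "\<exists>x\<in>B. g2 x \<noteq> 0")
  case True
  have h1: "g1 holomorphic_on B"
    by (rule holomorphic_transform[of "\<lambda>x. g2 x * u x"]) (use h2 hu eq in \<open>auto intro: holomorphic_intros\<close>)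
  have ne1: "\<exists>x\<in>B. g1 x \<noteq> 0" using True eq un by auto
  define n where "n = zorder g2 z"
  obtain r where nn: "if g2 z = 0 then n > 0 else n = 0" and r: "r > 0" "cball z r \<subseteq> B"
    "zor_poly g2 z holomorphic_on cball z r"
    "\<forall>w\<in>cball z r. g2 w = zor_poly g2 z w * (w - z) ^ nat n \<and> zor_poly g2 z w \<noteq> 0"
    using zorder_exist_zero[OF h2 B(1,2,3) True] unfolding n_def by blast
  have n0: "n \<ge> 0" using nn by (auto split: if_splits)
  have "zorder g1 z = n"
  proof (rule zorder_eqI[of "ball z r" z "\<lambda>x. zor_poly g2 z x * u x"])
    show "open (ball z r)" by simp
    show "z \<in> ball z r" using r(1) by simp
    have "ball z r \<subseteq> cball z r" by auto
    moreover have "ball z r \<subseteq> B" using r(2) by auto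
    ultimately show "(\<lambda>x. zor_poly g2 z x * u x) holomorphic_on ball z r"
      using holomorphic_on_subset[OF r(3)] holomorphic_on_subset[OF hu] by (intro holomorphic_intros) auto
    show "zor_poly g2 z z * u z \<noteq> 0" using r(1,4) un B(3) by auto
    fix w assume w: "w \<in> ball z r" "w \<noteq> z"
    then have "w \<in> B" "w \<in> cball z r" using r(2) by auto
    then show "g1 w = zor_poly g2 z w * u w * (w - z) powi n"
      using eq r(4) n0 by (simp add: power_int_def)
  qed
  then have "int (zero_order g1 z) = int (zero_order g2 z)"
    using zero_order_zorder[OF h1 B(1,2,3) ne1] zero_order_zorder[OF h2 B(1,2,3) True] n_def by simp
  then show ?thesis by simp
next
  case False
  have "\<forall>x\<in>B. g1 x = g2 x" using False eq by auto
  then have "eventually (\<lambda>x. g1 x = g2 x) (nhds z)"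
    unfolding eventually_nhds using B(1,3) by blast
  then have "\<And>n. (deriv ^^ n) g1 z = (deriv ^^ n) g2 z"
    by (intro higher_deriv_cong_ev) auto
  then show ?thesis unfolding zero_order_def by simp
qed

lemma small_in_Om:
  fixes Q :: "complex set"
  assumes "bounded (- Q)"
  obtains \<epsilon> where "\<epsilon> > 0" "\<And>v. v \<in> ball 0 \<epsilon> \<Longrightarrow> v \<noteq> 0 \<Longrightarrow> a + inverse v \<in> Q"
proof -
  from assms obtain R where R0: "\<forall>x\<in>- Q. norm x \<le> R" unfolding bounded_iff by blast
  have R: "\<And>x. x \<in> - Q \<Longrightarrow> norm x \<le> R" using R0 by (rule bspec)
  define M where "M = \<bar>R\<bar> + norm a + 1"
  have "0 \<le> \<bar>R\<bar>" "0 \<le> norm a" by simp_all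
  then have M: "M > 0" unfolding M_def by linarith
  define \<epsilon> where "\<epsilon> = inverse M"
  have ep: "\<epsilon> > 0" unfolding \<epsilon>_def using M by simp
  have key: "a + inverse v \<in> Q" if v: "v \<in> ball 0 \<epsilon>" "v \<noteq> 0" for v
  proof (rule ccontr)
    assume "a + inverse v \<notin> Q"
    then have le: "norm (a + inverse v) \<le> R" using R by blast
    have nv: "norm v < \<epsilon>" "norm v > 0" using v by auto
    have "inverse \<epsilon> < inverse (norm v)" using nv by (intro less_imp_inverse_less) auto
    then have i1: "M < inverse (norm v)" unfolding \<epsilon>_def using M by simp
    have i2: "norm (inverse v) = inverse (norm v)" by (rule norm_inverse)
    have i3: "norm ((a + inverse v) - a) \<le> norm (a + inverse v) + norm a" by (rule norm_triangle_ineq4)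
    then have i5: "norm (inverse v) \<le> norm (a + inverse v) + norm a" by simp
    have i6: "inverse (norm v) \<le> R + norm a" using i2 i5 le by linarith
    have "R \<le> \<bar>R\<bar>" by simp
    then show False using i1 i6 M_def by linarith
  qed
  show ?thesis by (rule that[OF ep key])
qed

lemma Om2_open_connected:
  fixes Q :: "complex set"
  assumes Q: "open Q" "connected Q" "bounded (- Q)" "a \<notin> Q"
  shows "open {u. u = 0 \<or> (u \<noteq> 0 \<and> a + inverse u \<in> Q)}" (is "open ?W")
    and "connected {u. u = 0 \<or> (u \<noteq> 0 \<and> a + inverse u \<in> Q)}"
proof -
  obtain \<epsilon> where ep: "\<epsilon> > 0" "\<And>v. v \<in> ball 0 \<epsilon> \<Longrightarrow> v \<noteq> 0 \<Longrightarrow> a + inverse v \<in> Q"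
    using small_in_Om[OF Q(3)] by metis
  have ballW: "ball 0 \<epsilon> \<subseteq> ?W" using ep by auto
  have contI: "continuous_on (- {0}) (\<lambda>v::complex. a + inverse v)"
    by (intro continuous_intros) auto
  have oV: "open ((- {0}) \<inter> (\<lambda>v. a + inverse v) -` Q)"
    by (rule continuous_open_preimage[OF contI]) (use Q in auto)
  show "open ?W" unfolding open_contains_ball
  proof
    fix u assume u: "u \<in> ?W"
    show "\<exists>e>0. ball u e \<subseteq> ?W"
    proof (cases "u = 0")
      case True then show ?thesis using ballW ep by blast
    next
      case False
      then have "u \<in> (- {0}) \<inter> (\<lambda>v. a + inverse v) -` Q" using u by auto
      then obtain e where "e > 0" "ball u e \<subseteq> (- {0}) \<inter> (\<lambda>v. a + inverse v) -` Q"
        using oV openE by metis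
      then show ?thesis by (intro exI[of _ e]) auto
    qed
  qed
  define T where "T = (\<lambda>w. inverse (w - a)) ` Q"
  have T: "T = {u. u \<noteq> 0 \<and> a + inverse u \<in> Q}"
  proof
    show "T \<subseteq> {u. u \<noteq> 0 \<and> a + inverse u \<in> Q}" unfolding T_def using Q(4) by auto
    show "{u. u \<noteq> 0 \<and> a + inverse u \<in> Q} \<subseteq> T"
    proof
      fix u assume "u \<in> {u. u \<noteq> 0 \<and> a + inverse u \<in> Q}"
      then have "a + inverse u \<in> Q" "u = inverse ((a + inverse u) - a)" by auto
      then show "u \<in> T" unfolding T_def by blast
    qed
  qed
  have cT: "connected T" unfolding T_def
    by (rule connected_continuous_image[OF _ Q(2)]) (use Q(4) in \<open>auto intro!: continuous_intros\<close>)
  have "0 \<in> closure T" unfolding closure_approachable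
  proof (intro allI impI)
    fix e :: real assume e: "e > 0"
    define v where "v = complex_of_real (min e \<epsilon> / 2)"
    have "v \<noteq> 0" "norm v < \<epsilon>" "norm v < e" using e ep by (auto simp: v_def)
    then have "v \<in> T" "dist v 0 < e" using ep(2)[of v] T by auto
    then show "\<exists>y\<in>T. dist y 0 < e" by blast
  qed
  moreover have W_eq: "?W = insert 0 T" using T by auto
  ultimately show "connected ?W" unfolding W_eq
    by (intro connected_intermediate_closure[OF cT]) (use closure_subset[of T] in auto)
qed

lemma h_holo:
  fixes f :: "complex \<Rightarrow> complex"
  assumes mero: "meromorphic_with_poles f G P" and G: "open G"
  shows "open (G - {x\<in>G-P. f x = a})"
    and "(\<lambda>x. if x \<in> P then 0 else inverse (f x - a)) holomorphic_on (G - {x\<in>G-P. f x = a})"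
proof -
  have PG: "P \<subseteq> G" using mero unfolding meromorphic_with_poles_def by blast
  have fh: "f holomorphic_on G - P" using mero unfolding meromorphic_with_poles_def by blast
  have oGP: "open (G - P)" using open_GP[OF mero G] .
  have cf: "continuous_on (G - P) f" using fh holomorphic_on_imp_continuous_on by blast
  define V0 where "V0 = (G - P) \<inter> f -` (- {a})"
  have oV0: "open V0" unfolding V0_def by (rule continuous_open_preimage[OF cf oGP]) auto
  let ?U = "G - {x\<in>G-P. f x = a}"
  let ?h = "\<lambda>x. if x \<in> P then 0 else inverse (f x - a)"
  have V0U: "V0 \<subseteq> ?U" unfolding V0_def by auto
  have hV0: "?h holomorphic_on V0"
  proof (rule holomorphic_transform[of "\<lambda>x. inverse (f x - a)"])
    show "(\<lambda>x. inverse (f x - a)) holomorphic_on V0"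
      using holomorphic_on_subset[OF fh] unfolding V0_def by (intro holomorphic_intros) auto
    show "\<And>x. x \<in> V0 \<Longrightarrow> inverse (f x - a) = ?h x" unfolding V0_def by simp
  qed
  have pnb: "\<exists>\<rho>>0. ball p \<rho> \<subseteq> ?U \<and> ?h holomorphic_on ball p \<rho>" if p: "p \<in> P" for p
  proof -
    obtain \<rho> where r: "\<rho> > 0" "ball p \<rho> \<subseteq> G" "\<And>x. x \<in> ball p \<rho> \<Longrightarrow> x \<noteq> p \<Longrightarrow> x \<notin> P \<and> norm a < norm (f x)"
      using pole_nbhd[OF mero G p, of "norm a"] by blast
    have sub: "ball p \<rho> - {p} \<subseteq> V0"
    proof
      fix x assume x: "x \<in> ball p \<rho> - {p}"
      then have "x \<notin> P" "norm a < norm (f x)" "x \<in> G" using r by auto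
      then show "x \<in> V0" unfolding V0_def by auto
    qed
    have bU: "ball p \<rho> \<subseteq> ?U" using sub V0U p PG r(2) by auto
    have lim: "filterlim f at_infinity (at p)" using mero p unfolding meromorphic_with_poles_def by blast
    have "filterlim (\<lambda>x. f x + (- a)) at_infinity (at p)"
      by (rule tendsto_add_filterlim_at_infinity'[OF lim tendsto_const])
    then have "filterlim (\<lambda>x. f x - a) at_infinity (at p)" by simp
    then have l1: "((\<lambda>x. inverse (f x - a)) \<longlongrightarrow> 0) (at p)"
      using filterlim_compose[OF tendsto_inverse_0] by blast
    have ev: "eventually (\<lambda>x. inverse (f x - a) = ?h x) (at p)"
    proof -
      have "eventually (\<lambda>x. x \<in> ball p \<rho>) (at p)"
        using eventually_at_ball[OF r(1), of p UNIV] by simp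
      moreover have "eventually (\<lambda>x. x \<noteq> p) (at p)" by (rule eventually_neq_at_within)
      ultimately have "eventually (\<lambda>x. x \<in> ball p \<rho> \<and> x \<noteq> p) (at p)" by (rule eventually_conj)
      then show ?thesis
      proof (rule eventually_mono)
        fix x assume "x \<in> ball p \<rho> \<and> x \<noteq> p"
        then show "inverse (f x - a) = ?h x" using r(3) by simp
      qed
    qed
    have "(?h \<longlongrightarrow> ?h p) (at p)" using Lim_transform_eventually[OF l1 ev] p by simp
    then have tl: "(?h \<longlongrightarrow> ?h p) (at p within ball p \<rho>)" by (rule tendsto_within_subset) simp
    have hol: "?h holomorphic_on (ball p \<rho> - {p})" using holomorphic_on_subset[OF hV0 sub] .
    have "?h holomorphic_on ball p \<rho>"
    proof (rule no_isolated_singularity'[of "{p}"])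
      fix z assume "z \<in> {p}"
      then have "z = p" by simp
      then show "(?h \<longlongrightarrow> ?h z) (at z within ball p \<rho>)" using tl by blast
    qed (use hol in simp_all)
    then show ?thesis using bU r(1) by blast
  qed
  show oU: "open ?U" unfolding open_contains_ball
  proof
    fix x assume x: "x \<in> ?U"
    show "\<exists>e>0. ball x e \<subseteq> ?U"
    proof (cases "x \<in> P")
      case True then show ?thesis using pnb by blast
    next
      case False
      then have "x \<in> V0" using x unfolding V0_def by auto
      then obtain e where "e > 0" "ball x e \<subseteq> V0" using oV0 openE by metis
      then show ?thesis using V0U by blast
    qed
  qed
  show "?h holomorphic_on ?U"
    unfolding holomorphic_on_def
  proof
    fix x assume x: "x \<in> ?U"
    obtain B where B: "open B" "x \<in> B" "?h holomorphic_on B"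
    proof (cases "x \<in> P")
      case True
      then obtain \<rho> where "\<rho> > 0" "?h holomorphic_on ball x \<rho>" using pnb by blast
      then have "open (ball x \<rho>)" "x \<in> ball x \<rho>" "?h holomorphic_on ball x \<rho>" by auto
      then show ?thesis by (rule that)
    next
      case False
      then have "x \<in> V0" using x unfolding V0_def by auto
      then show ?thesis using that[of V0] oV0 hV0 by blast
    qed
    have "?h field_differentiable at x" by (rule holomorphic_on_imp_differentiable_at[OF B(3) B(1) B(2)])
    then show "?h field_differentiable at x within ?U" by (rule field_differentiable_at_within)
  qed
qed

lemma inv_diff: "(A::complex) \<noteq> 0 \<Longrightarrow> B \<noteq> 0 \<Longrightarrow> inverse A - inverse B = (B - A) * inverse (A * B)"
  by (simp add: field_simps)

lemma inv_rel: assumes "(F::complex) \<noteq> 0" "F \<noteq> a" shows "inverse F = inverse (F - a) * inverse (1 + a * inverse (F - a))"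
proof -
  have d: "F - a \<noteq> 0" using assms by simp
  have "1 + a * inverse (F - a) = F * inverse (F - a)" using d by (simp add: field_simps)
  then show ?thesis using d assms by (simp add: field_simps)
qed

lemma mult_conv_val:
  fixes f h :: "complex \<Rightarrow> complex"
  assumes V: "open V" "f holomorphic_on V" "\<forall>x\<in>V. f x \<noteq> a" "z \<in> V" "w \<noteq> a"
    and hV: "\<forall>x\<in>V. h x = inverse (f x - a)"
  shows "mult_at h (inverse (w - a)) z = mult_at f w z"
proof -
  obtain e where e: "e > 0" "ball z e \<subseteq> V" using V(1,4) openE by blast
  have "zero_order (\<lambda>x. h x - inverse (w - a)) z = zero_order (\<lambda>x. f x - w) z"
  proof (rule zero_order_unit[of "ball z e" _ _ "\<lambda>x. - inverse ((f x - a) * (w - a))"])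
    show "open (ball z e)" "connected (ball z e)" "z \<in> ball z e" using e by auto
    have fb: "f holomorphic_on ball z e" using holomorphic_on_subset[OF V(2) e(2)] .
    show "(\<lambda>x. f x - w) holomorphic_on ball z e" using fb by (intro holomorphic_intros)
    show "(\<lambda>x. - inverse ((f x - a) * (w - a))) holomorphic_on ball z e"
      using fb V(3,5) e(2) by (intro holomorphic_intros) auto
    show "\<forall>x\<in>ball z e. - inverse ((f x - a) * (w - a)) \<noteq> 0" using V(3,5) e(2) by auto
    show "\<forall>x\<in>ball z e. h x - inverse (w - a) = (f x - w) * - inverse ((f x - a) * (w - a))"
    proof
      fix x assume "x \<in> ball z e"
      then have x: "x \<in> V" using e(2) by blast
      then have fa: "f x - a \<noteq> 0" using V(3) by simp
      have wa: "w - a \<noteq> 0" using V(5) by simp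
      have hx: "h x = inverse (f x - a)" using hV x by blast
      have "h x - inverse (w - a) = ((w - a) - (f x - a)) * inverse ((f x - a) * (w - a))"
        unfolding hx by (rule inv_diff[OF fa wa])
      also have "\<dots> = (f x - w) * - inverse ((f x - a) * (w - a))" by (simp add: algebra_simps)
      finally show "h x - inverse (w - a) = (f x - w) * - inverse ((f x - a) * (w - a))" .
    qed
  qed
  then show ?thesis unfolding mult_at_def .
qed

lemma mult_conv_pole:
  fixes f h k :: "complex \<Rightarrow> complex"
  assumes B: "open B" "connected B" "p \<in> B" and hB: "h holomorphic_on B" and h0: "h p = 0" and k0: "k p = 0"
    and rel: "\<forall>x\<in>B-{p}. h x = inverse (f x - a) \<and> k x = inverse (f x) \<and> f x \<noteq> 0 \<and> f x \<noteq> a"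
  shows "zero_order k p = mult_at h 0 p"
proof -
  have nz: "1 + a * h x \<noteq> 0" if x: "x \<in> B" for x
  proof (cases "x = p")
    case True then show ?thesis using h0 by simp
  next
    case False
    then have "h x = inverse (f x - a)" "f x \<noteq> 0" "f x - a \<noteq> 0" using rel x by auto
    then have "1 + a * h x = f x / (f x - a)" by (simp add: field_simps)
    then show ?thesis using \<open>f x \<noteq> 0\<close> \<open>f x - a \<noteq> 0\<close> by simp
  qed
  have "zero_order k p = zero_order (\<lambda>x. h x - 0) p"
  proof (rule zero_order_unit[OF B _ _ _ _, of _ "\<lambda>x. inverse (1 + a * h x)"])
    show "(\<lambda>x. h x - 0) holomorphic_on B" using hB by simp
    show "(\<lambda>x. inverse (1 + a * h x)) holomorphic_on B" using hB nz by (intro holomorphic_intros) auto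
    show "\<forall>x\<in>B. inverse (1 + a * h x) \<noteq> 0" using nz by simp
    show "\<forall>x\<in>B. k x = (h x - 0) * inverse (1 + a * h x)"
    proof
      fix x assume x: "x \<in> B"
      show "k x = (h x - 0) * inverse (1 + a * h x)"
      proof (cases "x = p")
        case True then show ?thesis using h0 k0 by simp
      next
        case False
        then have r: "h x = inverse (f x - a)" "k x = inverse (f x)" "f x \<noteq> 0" "f x - a \<noteq> 0" using rel x by auto
        have "f x \<noteq> a" using r(4) by simp
        then show ?thesis using inv_rel[OF r(3)] r(1,2) by simp
      qed
    qed
  qed
  then show ?thesis unfolding mult_at_def .
qed

theorem mainTheorem2:
  fixes f :: "complex \<Rightarrow> complex" and G P S \<Gamma> :: "complex set"
  assumes G_open: "open G" and G_conn: "connected G" and G_sc: "simply_connected G"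
    and S_smooth: "smooth_jordan_curve S" and S_sub: "S \<subseteq> G"
    and \<Gamma>_smooth: "smooth_jordan_curve \<Gamma>"
    and f_mero: "meromorphic_with_poles f G P"
    and S_lemn: "S \<in> components {z \<in> G - P. f z \<in> \<Gamma>}"
  shows
    "(\<forall>E \<in> components ({z \<in> G - P. f z \<in> inside \<Gamma>} \<inter> inside S).
        \<exists>n::nat. n > 0 \<and>
          (\<forall>w \<in> inside \<Gamma>. finite {z \<in> E. f z = w} \<and>
             (\<Sum>z \<in> {z \<in> E. f z = w}. mult_at f w z) = n))
     \<and>
     (\<forall>E \<in> components (({z \<in> G - P. f z \<in> outside \<Gamma>} \<union> P) \<inter> inside S).
        \<exists>n::nat. n > 0 \<and>
          (\<forall>w \<in> outside \<Gamma>. finite {z \<in> E - P. f z = w} \<and>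
             (\<Sum>z \<in> {z \<in> E - P. f z = w}. mult_at f w z) = n) \<and>
          finite (E \<inter> P) \<and> (\<Sum>z \<in> E \<inter> P. pole_mult f P z) = n)"
proof -
  have PG: "P \<subseteq> G" using f_mero unfolding meromorphic_with_poles_def by blast
  have fh: "f holomorphic_on G - P" using f_mero unfolding meromorphic_with_poles_def by blast
  have oGP: "open (G - P)" by (rule open_GP[OF f_mero G_open])
  have cf: "continuous_on (G - P) f" using fh by (rule holomorphic_on_imp_continuous_on)
  note JG = jordan_facts[OF \<Gamma>_smooth]
  note JS = jordan_facts[OF S_smooth]
  have clS: "closed S" using JS(1) compact_imp_closed by blast
  have bS: "bounded (inside S)" using JS(5) .
  have inG: "inside S \<subseteq> G" by (rule subset_simply_connected_imp_inside_subset[OF G_sc G_open S_sub])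
  have Ssub: "S \<subseteq> {z \<in> G - P. f z \<in> \<Gamma>}" by (rule in_components_subset[OF S_lemn])
  have clinS: "closure (inside S) \<subseteq> S \<union> inside S" by (rule closure_inside_subset[OF clS])
  have pre_open: "open ((G - P) \<inter> f -` T)" if "open T" for T
    by (rule continuous_open_preimage[OF cf oGP that])
  have trich: "x \<in> inside \<Gamma> \<or> x \<in> outside \<Gamma> \<or> x \<in> \<Gamma>" for x using JG(8) by blast
  have dIO: "x \<in> inside \<Gamma> \<Longrightarrow> x \<notin> outside \<Gamma>" for x using JG(9) by blast
  have dIG: "x \<in> inside \<Gamma> \<Longrightarrow> x \<notin> \<Gamma>" for x using inside_no_overlap[of \<Gamma>] by blast
  have dOG: "x \<in> outside \<Gamma> \<Longrightarrow> x \<notin> \<Gamma>" for x using outside_no_overlap[of \<Gamma>] by blast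
  have frE: "z \<in> closure E \<and> z \<notin> E" if "z \<in> frontier E" "open E" for z and E :: "complex set"
    using that by (simp add: frontier_def interior_open)
  define X1 where "X1 = {z \<in> G - P. f z \<in> inside \<Gamma>} \<inter> inside S"
  have X1eq: "X1 = ((G - P) \<inter> f -` inside \<Gamma>) \<inter> inside S" unfolding X1_def by auto
  have oX1: "open X1" unfolding X1eq using pre_open[OF JG(2)] open_inside[OF clS] by (rule open_Int)
  from JG(5) obtain BG where BG: "\<forall>x\<in>inside \<Gamma>. norm x \<le> BG" unfolding bounded_iff by blast
  have part1: "\<exists>n::nat. n > 0 \<and> (\<forall>w \<in> inside \<Gamma>. finite {z \<in> E. f z = w} \<and>
             (\<Sum>z \<in> {z \<in> E. f z = w}. mult_at f w z) = n)" if E: "E \<in> components X1" for E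
  proof -
    have EX: "E \<subseteq> X1" by (rule in_components_subset[OF E])
    have oE: "open E" by (rule open_components[OF oX1 E])
    have cE: "connected E" by (rule in_components_connected[OF E])
    have neE: "E \<noteq> {}" by (rule in_components_nonempty[OF E])
    have bE: "bounded E" using bS EX unfolding X1_def by (meson bounded_subset le_inf_iff)
    have fr: "z \<in> G - P \<and> f z \<in> \<Gamma>" if z: "z \<in> frontier E" for z
    proof -
      have zc: "z \<in> closure E" and znE: "z \<notin> E" using frE[OF z oE] by auto
      have "closure E \<subseteq> closure (inside S)" using EX unfolding X1_def by (intro closure_mono) auto
      then have "z \<in> S \<or> z \<in> inside S" using zc clinS by blast
      then show ?thesis
      proof
        assume "z \<in> S" then show ?thesis using Ssub by blast
      next
        assume zi: "z \<in> inside S"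
        then have zG: "z \<in> G" using inG by blast
        have zP: "z \<notin> P"
        proof
          assume zP: "z \<in> P"
          obtain \<rho> where r: "\<rho> > 0" "ball z \<rho> \<subseteq> G" "\<And>x. x \<in> ball z \<rho> \<Longrightarrow> x \<noteq> z \<Longrightarrow> x \<notin> P \<and> BG < norm (f x)"
            using pole_nbhd[OF f_mero G_open zP, of BG] by blast
          obtain x where x: "x \<in> E" "x \<in> ball z \<rho>" using closure_open_meet[OF zc, of "ball z \<rho>"] r(1) by auto
          have "x \<noteq> z" using x znE by blast
          then have "BG < norm (f x)" using r(3) x by blast
          moreover have "f x \<in> inside \<Gamma>" using x EX unfolding X1_def by blast
          ultimately show False using BG by fastforce
        qed
        have zGP: "z \<in> G - P" using zG zP by blast
        have "f z \<notin> inside \<Gamma>"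
        proof
          assume "f z \<in> inside \<Gamma>"
          then have "z \<in> X1" using zGP zi unfolding X1_def by blast
          then have "z \<in> E" using closure_component_open[OF oX1 E zc] by blast
          then show False using znE by blast
        qed
        moreover have "f z \<notin> outside \<Gamma>"
        proof
          assume "f z \<in> outside \<Gamma>"
          then have "z \<in> (G - P) \<inter> f -` outside \<Gamma>" using zGP by blast
          then obtain x where x: "x \<in> E" "x \<in> (G - P) \<inter> f -` outside \<Gamma>"
            using closure_open_meet[OF zc pre_open[OF JG(6)]] by blast
          then have "f x \<in> inside \<Gamma>" using EX unfolding X1_def by blast
          then show False using x dIO by blast
        qed
        ultimately show ?thesis using zGP trich by blast
      qed
    qed
    have clE: "closure E \<subseteq> G - P"
    proof
      fix z assume "z \<in> closure E"
      then have "z \<in> E \<or> z \<in> frontier E" using closure_Un_frontier[of E] by blast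
      then show "z \<in> G - P" using fr EX unfolding X1_def by blast
    qed
    have fE: "f ` E \<subseteq> inside \<Gamma>" using EX unfolding X1_def by blast
    have ffr: "\<forall>z\<in>frontier E. f z \<notin> inside \<Gamma>" using fr dIG by blast
    show ?thesis using degree[OF oGP fh oE cE bE clE neE JG(2,3) fE ffr] by blast
  qed
  obtain a where a: "a \<in> inside \<Gamma>" using JG(4) by blast
  have aO: "a \<notin> outside \<Gamma>" using a dIO by blast
  have bcO: "bounded (- outside \<Gamma>)" using JG(1) compact_imp_bounded cobounded_outside by blast
  from bcO obtain BO where BO: "\<forall>x\<in>- outside \<Gamma>. norm x \<le> BO" unfolding bounded_iff by blast
  have bigO: "x \<in> outside \<Gamma>" if xb: "BO < norm x" for x
  proof (rule ccontr)
    assume "x \<notin> outside \<Gamma>"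
    then have "x \<in> - outside \<Gamma>" by simp
    then have "norm x \<le> BO" using BO by blast
    then show False using xb by linarith
  qed
  define Y where "Y = {z \<in> G - P. f z \<in> outside \<Gamma>} \<union> P"
  define X2 where "X2 = Y \<inter> inside S"
  have oY: "open Y" unfolding open_contains_ball
  proof
    fix z assume z: "z \<in> Y"
    show "\<exists>e>0. ball z e \<subseteq> Y"
    proof (cases "z \<in> P")
      case True
      obtain \<rho> where r: "\<rho> > 0" "ball z \<rho> \<subseteq> G" "\<And>x. x \<in> ball z \<rho> \<Longrightarrow> x \<noteq> z \<Longrightarrow> x \<notin> P \<and> BO < norm (f x)"
        using pole_nbhd[OF f_mero G_open True, of BO] by blast
      have "ball z \<rho> \<subseteq> Y"
      proof
        fix x assume x: "x \<in> ball z \<rho>"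
        show "x \<in> Y"
        proof (cases "x = z")
          case True then show ?thesis using \<open>z \<in> P\<close> Y_def by blast
        next
          case False
          then have "x \<notin> P" "BO < norm (f x)" using r(3) x by auto
          then show ?thesis using bigO r(2) x unfolding Y_def by blast
        qed
      qed
      then show ?thesis using r(1) by blast
    next
      case False
      then have "z \<in> (G - P) \<inter> f -` outside \<Gamma>" using z unfolding Y_def by blast
      then obtain e where "e > 0" "ball z e \<subseteq> (G - P) \<inter> f -` outside \<Gamma>"
        using pre_open[OF JG(6)] openE by blast
      then show ?thesis unfolding Y_def by blast
    qed
  qed
  have oX2: "open X2" unfolding X2_def using oY open_inside[OF clS] by (rule open_Int)
  define U2 where "U2 = G - {x\<in>G-P. f x = a}"
  define h where "h = (\<lambda>x. if x \<in> P then 0 else inverse (f x - a))"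
  have oU2: "open U2" unfolding U2_def by (rule h_holo(1)[OF f_mero G_open])
  have hU2: "h holomorphic_on U2" unfolding U2_def h_def by (rule h_holo(2)[OF f_mero G_open])
  define Om where "Om = {u. u = 0 \<or> (u \<noteq> 0 \<and> a + inverse u \<in> outside \<Gamma>)}"
  have oOm: "open Om" unfolding Om_def by (rule Om2_open_connected(1)[OF JG(6,7) bcO aO])
  have cOm: "connected Om" unfolding Om_def by (rule Om2_open_connected(2)[OF JG(6,7) bcO aO])
  have V0o: "open ((G - P) \<inter> f -` (- {a}))" by (intro pre_open open_Compl closed_singleton)
  have part2: "\<exists>n::nat. n > 0 \<and>
          (\<forall>w \<in> outside \<Gamma>. finite {z \<in> E - P. f z = w} \<and>
             (\<Sum>z \<in> {z \<in> E - P. f z = w}. mult_at f w z) = n) \<and>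
          finite (E \<inter> P) \<and> (\<Sum>z \<in> E \<inter> P. pole_mult f P z) = n" if E: "E \<in> components X2" for E
  proof -
    have EX: "E \<subseteq> X2" by (rule in_components_subset[OF E])
    have oE: "open E" by (rule open_components[OF oX2 E])
    have cE: "connected E" by (rule in_components_connected[OF E])
    have neE: "E \<noteq> {}" by (rule in_components_nonempty[OF E])
    have bE: "bounded E" using bS EX unfolding X2_def by (meson bounded_subset le_inf_iff)
    have EfO: "f z \<in> outside \<Gamma>" if "z \<in> E" "z \<notin> P" for z using that EX unfolding X2_def Y_def by blast
    have EG: "E \<subseteq> G" using EX inG unfolding X2_def by blast
    have fr: "z \<in> G - P \<and> f z \<in> \<Gamma>" if z: "z \<in> frontier E" for z
    proof -
      have zc: "z \<in> closure E" and znE: "z \<notin> E" using frE[OF z oE] by auto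
      have "closure E \<subseteq> closure (inside S)" using EX unfolding X2_def by (intro closure_mono) auto
      then have "z \<in> S \<or> z \<in> inside S" using zc clinS by blast
      then show ?thesis
      proof
        assume "z \<in> S" then show ?thesis using Ssub by blast
      next
        assume zi: "z \<in> inside S"
        then have zG: "z \<in> G" using inG by blast
        have zP: "z \<notin> P"
        proof
          assume zP: "z \<in> P"
          then have "z \<in> X2" using zi unfolding X2_def Y_def by blast
          then have "z \<in> E" using closure_component_open[OF oX2 E zc] by blast
          then show False using znE by blast
        qed
        have zGP: "z \<in> G - P" using zG zP by blast
        have "f z \<notin> outside \<Gamma>"
        proof
          assume "f z \<in> outside \<Gamma>"
          then have "z \<in> X2" using zGP zi unfolding X2_def Y_def by blast
          then have "z \<in> E" using closure_component_open[OF oX2 E zc] by blast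
          then show False using znE by blast
        qed
        moreover have "f z \<notin> inside \<Gamma>"
        proof
          assume "f z \<in> inside \<Gamma>"
          then have "z \<in> (G - P) \<inter> f -` inside \<Gamma>" using zGP by blast
          then obtain x where x: "x \<in> E" "x \<in> (G - P) \<inter> f -` inside \<Gamma>"
            using closure_open_meet[OF zc pre_open[OF JG(2)]] by blast
          then have "f x \<in> outside \<Gamma>" using EfO by blast
          then show False using x dIO by blast
        qed
        ultimately show ?thesis using zGP trich by blast
      qed
    qed
    have EU: "E \<subseteq> U2"
    proof
      fix z assume z: "z \<in> E"
      show "z \<in> U2"
      proof (cases "z \<in> P")
        case True then show ?thesis using EG z unfolding U2_def by blast
      next
        case False
        then have "f z \<in> outside \<Gamma>" using EfO z by blast
        then have "f z \<noteq> a" using aO by blast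
        then show ?thesis using EG z unfolding U2_def by blast
      qed
    qed
    have clE: "closure E \<subseteq> U2"
    proof
      fix z assume "z \<in> closure E"
      then have "z \<in> E \<or> z \<in> frontier E" using closure_Un_frontier[of E] by blast
      then show "z \<in> U2"
      proof
        assume "z \<in> frontier E"
        then have "z \<in> G - P" "f z \<in> \<Gamma>" using fr by auto
        moreover have "f z \<noteq> a" using \<open>f z \<in> \<Gamma>\<close> a dIG by blast
        ultimately show ?thesis unfolding U2_def by blast
      qed (use EU in blast)
    qed
    have hE: "h ` E \<subseteq> Om"
    proof
      fix u assume "u \<in> h ` E"
      then obtain z where z: "z \<in> E" "u = h z" by blast
      show "u \<in> Om"
      proof (cases "z \<in> P")
        case True then show ?thesis using z unfolding h_def Om_def by simp
      next
        case False
        then have fO: "f z \<in> outside \<Gamma>" using EfO z by blast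
        then have "f z - a \<noteq> 0" using aO by auto
        then show ?thesis using z False fO unfolding h_def Om_def by simp
      qed
    qed
    have hfr: "\<forall>z\<in>frontier E. h z \<notin> Om"
    proof
      fix z assume "z \<in> frontier E"
      then have zz: "z \<in> G - P" "f z \<in> \<Gamma>" using fr by auto
      then have "f z - a \<noteq> 0" using a dIG by auto
      then show "h z \<notin> Om" using zz dOG unfolding h_def Om_def by auto
    qed
    obtain n where n: "n > 0" "\<forall>c\<in>Om. finite {z\<in>E. h z = c} \<and> (\<Sum>z\<in>{z\<in>E. h z = c}. mult_at h c z) = n"
      using degree[OF oU2 hU2 oE cE bE clE neE oOm cOm hE hfr] by blast
    have vals: "finite {z \<in> E - P. f z = w} \<and> (\<Sum>z \<in> {z \<in> E - P. f z = w}. mult_at f w z) = n"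
      if w: "w \<in> outside \<Gamma>" for w
    proof -
      have wa: "w \<noteq> a" using w aO by blast
      define c where "c = inverse (w - a)"
      have c0: "c \<noteq> 0" using wa unfolding c_def by simp
      have cOm: "c \<in> Om" using c0 w unfolding Om_def c_def by simp
      have seq: "{z \<in> E - P. f z = w} = {z\<in>E. h z = c}"
      proof
        show "{z \<in> E - P. f z = w} \<subseteq> {z\<in>E. h z = c}" unfolding h_def c_def by auto
        show "{z\<in>E. h z = c} \<subseteq> {z \<in> E - P. f z = w}"
        proof
          fix z assume z: "z \<in> {z\<in>E. h z = c}"
          then have zP: "z \<notin> P" using c0 unfolding h_def by auto
          then have "inverse (f z - a) = inverse (w - a)" using z unfolding h_def c_def by simp
          then have "f z = w" by simp
          then show "z \<in> {z \<in> E - P. f z = w}" using z zP by blast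
        qed
      qed
      have meq: "mult_at h c z = mult_at f w z" if z: "z \<in> {z \<in> E - P. f z = w}" for z
        unfolding c_def
      proof (rule mult_conv_val[OF V0o])
        show "f holomorphic_on (G - P) \<inter> f -` (- {a})" using fh by (rule holomorphic_on_subset) blast
        show "\<forall>x\<in>(G - P) \<inter> f -` (- {a}). f x \<noteq> a" by auto
        have "f z \<noteq> a" using z wa by auto
        then show "z \<in> (G - P) \<inter> f -` (- {a})" using z EG by auto
        show "w \<noteq> a" by (rule wa)
        show "\<forall>x\<in>(G - P) \<inter> f -` (- {a}). h x = inverse (f x - a)" unfolding h_def by auto
      qed
      have "(\<Sum>z \<in> {z \<in> E - P. f z = w}. mult_at f w z) = (\<Sum>z \<in> {z \<in> E - P. f z = w}. mult_at h c z)"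
        using meq by (intro sum.cong) auto
      also have "\<dots> = n" unfolding seq using n(2) cOm by blast
      finally show ?thesis using n(2) cOm seq by auto
    qed
    have peq: "{z\<in>E. h z = 0} = E \<inter> P"
    proof
      show "E \<inter> P \<subseteq> {z\<in>E. h z = 0}" unfolding h_def by auto
      show "{z\<in>E. h z = 0} \<subseteq> E \<inter> P"
      proof
        fix z assume z: "z \<in> {z\<in>E. h z = 0}"
        show "z \<in> E \<inter> P"
        proof (rule ccontr)
          assume "z \<notin> E \<inter> P"
          then have zP: "z \<notin> P" using z by blast
          then have "f z \<in> outside \<Gamma>" using EfO z by blast
          then have "f z - a \<noteq> 0" using aO by auto
          then show False using z zP unfolding h_def by simp
        qed
      qed
    qed
    have pm: "pole_mult f P p = mult_at h 0 p" if p: "p \<in> E \<inter> P" for p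
    proof -
      have pP: "p \<in> P" using p by blast
      obtain \<rho> where r: "\<rho> > 0" "ball p \<rho> \<subseteq> G" "\<And>x. x \<in> ball p \<rho> \<Longrightarrow> x \<noteq> p \<Longrightarrow> x \<notin> P \<and> norm a + 1 < norm (f x)"
        using pole_nbhd[OF f_mero G_open pP, of "norm a + 1"] by blast
      have fne: "f x \<noteq> 0 \<and> f x \<noteq> a" if "x \<in> ball p \<rho>" "x \<noteq> p" for x
      proof -
        have l: "norm a + 1 < norm (f x)" using r(3) that by blast
        have nn: "0 \<le> norm a" by simp
        have "norm (f x) > 0" using l nn by linarith
        moreover have "norm (f x) \<noteq> norm a" using l by linarith
        ultimately show ?thesis by auto
      qed
      have bU: "ball p \<rho> \<subseteq> U2"
      proof
        fix x assume x: "x \<in> ball p \<rho>"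
        show "x \<in> U2"
        proof (cases "x = p")
          case True then show ?thesis using pP PG unfolding U2_def by blast
        next
          case False then show ?thesis using fne[OF x False] r(2) x unfolding U2_def by blast
        qed
      qed
      show ?thesis unfolding pole_mult_def
      proof (rule mult_conv_pole[of "ball p \<rho>"])
        show "open (ball p \<rho>)" "connected (ball p \<rho>)" "p \<in> ball p \<rho>" using r(1) by auto
        show "h holomorphic_on ball p \<rho>" using hU2 bU by (rule holomorphic_on_subset)
        show "h p = 0" using pP unfolding h_def by simp
        show "(if p \<in> P then 0 else inverse (f p)) = 0" using pP by simp
        show "\<forall>x\<in>ball p \<rho> - {p}. h x = inverse (f x - a) \<and> (if x \<in> P then 0 else inverse (f x)) = inverse (f x) \<and> f x \<noteq> 0 \<and> f x \<noteq> a"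
        proof
          fix x assume x: "x \<in> ball p \<rho> - {p}"
          then have "x \<notin> P" using r(3) by blast
          then show "h x = inverse (f x - a) \<and> (if x \<in> P then 0 else inverse (f x)) = inverse (f x) \<and> f x \<noteq> 0 \<and> f x \<noteq> a"
            using fne x unfolding h_def by auto
        qed
      qed
    qed
    have 0: "(0::complex) \<in> Om" unfolding Om_def by simp
    have finP: "finite (E \<inter> P)" using n(2) 0 peq by metis
    have "(\<Sum>z \<in> E \<inter> P. pole_mult f P z) = (\<Sum>z \<in> E \<inter> P. mult_at h 0 z)"
      using pm by (rule sum.cong[OF refl])
    also have "\<dots> = n" using n(2) 0 peq by metis
    finally show ?thesis using n(1) vals finP by blast
  qed
  show ?thesis using part1 part2 unfolding X1_def X2_def Y_def by blast
qed

end
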